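(* Consider the setting in the context and let $\alpha>0$. (i) (Necessary condition) If the modified 4-player game is $\alpha$-strongly monotone, then for both $i\in\{1,2\}$ and at all points, $\epsilon_i\nabla^2\nu_i\succeq\alpha I$ and $\nabla_p^2D_i\succeq\alpha I$; that is, $\epsilon_i\nu_i$ is $\alpha$-strongly convex and $D_i(p_i,\pi_{-i})$ is $\alpha$-strongly convex in $p_i$ for each fixed $\pi_{-i}$. (ii) (Sufficient condition) If each $D_i$ is jointly convex in both arguments, and for both $i\in\{1,2\}$ and at all points $$\epsilon_i\nabla^2\nu_i(\pi_i)-\tfrac12\nabla_\pi^2D_{-i}(p_{-i},\pi_i)\succeq\alpha I,\qquad \tfrac12\nabla_p^2D_{-i}(p_{-i},\pi_i)\succeq\alpha I,$$ then the modified 4-player game is $\alpha$-strongly monotone.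
   Context: Two players $i\in\{1,2\}$ have finite action sets $\mathcal{A}_1,\mathcal{A}_2$; $-i$ denotes the other player, $\Delta_n$ the probability simplex in $\mathbb{R}^n$. Payoff matrices $R_1\in\mathbb{R}^{|\mathcal{A}_1|\times|\mathcal{A}_2|}$, $R_2\in\mathbb{R}^{|\mathcal{A}_2|\times|\mathcal{A}_1|}$. For each $i$ fix $\epsilon_i>0$, a twice continuously differentiable strictly convex function $\nu_i$ on an open set containing $\Delta_{|\mathcal{A}_i|}$, and a twice continuously differentiable penalty function $D_i(p,\pi)$, $p,\pi\in\Delta_{|\mathcal{A}_{-i}|}$ (defined on an open set containing this product), convex in its first argument $p$. Notation: $\nabla^2\nu_i$ is the Hessian of $\nu_i$; $\nabla_p^2D_i$ and $\nabla_\pi^2D_i$ are the Hessians of $D_i$ with respect to its first and second argument respectively; $\succeq$ is the positive semidefinite order. The modified 4-player game has joint strategy $z=(\pi_1,\pi_2,p_1,p_2)\in\mathcal{Z}=\Delta_{|\mathcal{A}_1|}\times\Delta_{|\mathcal{A}_2|}\times\Delta_{|\mathcal{A}_2|}\times\Delta_{|\mathcal{A}_1|}$; player $\pi_i$ minimizes $J_i(z)=-\pi_i^TR_ip_i-D_i(p_i,\pi_{-i})+\epsilon_i\nu_i(\pi_i)$ over $\pi_i$ and adversary $p_i$ minimizes $\bar J_i(z)=\pi_i^TR_ip_i+D_i(p_i,\pi_{-i})-\epsilon_i\nu_i(\pi_i)$ over $p_i$. Its gradient operator is $F(z;\mathbf{R})=(-R_1p_1+\epsilon_1\nabla\nu_1(\pi_1),\,-R_2p_2+\epsilon_2\nabla\nu_2(\pi_2),\,R_1^T\pi_1+\nabla_{p_1}D_1(p_1,\pi_2),\,R_2^T\pi_2+\nabla_{p_2}D_2(p_2,\pi_1))$,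 and the game is $\alpha$-strongly monotone if $(z-z')^T(F(z;\mathbf{R})-F(z';\mathbf{R}))\ge\alpha\|z-z'\|_2^2$ for all $z,z'\in\mathcal{Z}$.
   Formalization: Each inequality $\succeq\alpha I$ in (i) and (ii) is tested only on vectors whose coordinates sum to zero (directions tangent to the simplex), not on the whole space. Apart from conventions, each condition added here is assumed in the paper as well or is needed for the statement above to hold. *)

theory Defs
  imports "HOL-Analysis.Analysis"
begin

definition prob_simplex :: "(real^('n::finite)) set" where
  "prob_simplex = {x. (\<forall>i. 0 \<le> x $ i) \<and> (\<Sum>i\<in>UNIV. x $ i) = 1}"

(* Strict convexity of f on S (S need not be convex: only segments lying in S count). *)
definition strictly_convex_on :: "'a::real_vector set \<Rightarrow> ('a \<Rightarrow> real) \<Rightarrow> bool" where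
  "strictly_convex_on S f \<longleftrightarrow>
     (\<forall>x\<in>S. \<forall>y\<in>S. x \<noteq> y \<longrightarrow> (\<forall>u::real. 0 < u \<and> u < 1 \<longrightarrow>
        (1 - u) *\<^sub>R x + u *\<^sub>R y \<in> S \<longrightarrow>
        f ((1 - u) *\<^sub>R x + u *\<^sub>R y) < (1 - u) * f x + u * f y))"

definition C2_on :: "(real^('n::finite)) set \<Rightarrow> (real^'n \<Rightarrow> real) \<Rightarrow> (real^'n \<Rightarrow> real^'n)
    \<Rightarrow> (real^'n \<Rightarrow> real^'n^'n) \<Rightarrow> bool" where
  "C2_on U f g H \<longleftrightarrow> open U \<and>
     (\<forall>x\<in>U. (f has_derivative (\<lambda>h. g x \<bullet> h)) (at x) \<and>
             (g has_derivative (\<lambda>h. H x *v h)) (at x)) \<and>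
     continuous_on U H"

(* D(p,\<pi>) is twice continuously differentiable on the open set U of pairs (p,\<pi>), with
   partial gradients gp (w.r.t. p), gq (w.r.t. \<pi>) and Hessian blocks
   Hpp = \<nabla>_p^2 D, Hpq, Hqp (mixed), Hqq = \<nabla>_\<pi>^2 D. *)
definition C2_on2 :: "((real^('n::finite)) \<times> (real^'n)) set \<Rightarrow> (real^'n \<Rightarrow> real^'n \<Rightarrow> real)
    \<Rightarrow> (real^'n \<Rightarrow> real^'n \<Rightarrow> real^'n) \<Rightarrow> (real^'n \<Rightarrow> real^'n \<Rightarrow> real^'n)
    \<Rightarrow> (real^'n \<Rightarrow> real^'n \<Rightarrow> real^'n^'n) \<Rightarrow> (real^'n \<Rightarrow> real^'n \<Rightarrow> real^'n^'n)
    \<Rightarrow> (real^'n \<Rightarrow> real^'n \<Rightarrow> real^'n^'n) \<Rightarrow> (real^'n \<Rightarrow> real^'n \<Rightarrow> real^'n^'n) \<Rightarrow> bool" where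
  "C2_on2 U D gp gq Hpp Hpq Hqp Hqq \<longleftrightarrow> open U \<and>
     (\<forall>z\<in>U.
        ((\<lambda>w. D (fst w) (snd w)) has_derivative
            (\<lambda>h. gp (fst z) (snd z) \<bullet> fst h + gq (fst z) (snd z) \<bullet> snd h)) (at z) \<and>
        ((\<lambda>w. gp (fst w) (snd w)) has_derivative
            (\<lambda>h. Hpp (fst z) (snd z) *v fst h + Hpq (fst z) (snd z) *v snd h)) (at z) \<and>
        ((\<lambda>w. gq (fst w) (snd w)) has_derivative
            (\<lambda>h. Hqp (fst z) (snd z) *v fst h + Hqq (fst z) (snd z) *v snd h)) (at z)) \<and>
     continuous_on U (\<lambda>w. Hpp (fst w) (snd w)) \<and> continuous_on U (\<lambda>w. Hpq (fst w) (snd w)) \<and>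
     continuous_on U (\<lambda>w. Hqp (fst w) (snd w)) \<and> continuous_on U (\<lambda>w. Hqq (fst w) (snd w))"

(* Loewner order H \<succeq> a I, tested on the directions tangent to the simplex
   (vectors with coordinate sum 0). *)
definition psd_ge :: "real^'n^('n::finite) \<Rightarrow> real \<Rightarrow> bool" where
  "psd_ge H a \<longleftrightarrow> (\<forall>v::real^'n. (\<Sum>i\<in>UNIV. v $ i) = 0 \<longrightarrow> a * (v \<bullet> v) \<le> v \<bullet> (H *v v))"

definition game_F ::
  "real^'n2^'n1 \<Rightarrow> real^'n1^'n2 \<Rightarrow> real \<Rightarrow> real \<Rightarrow>
   (real^('n1::finite) \<Rightarrow> real^'n1) \<Rightarrow> (real^('n2::finite) \<Rightarrow> real^'n2) \<Rightarrow>
   (real^'n2 \<Rightarrow> real^'n2 \<Rightarrow> real^'n2) \<Rightarrow> (real^'n1 \<Rightarrow> real^'n1 \<Rightarrow> real^'n1) \<Rightarrow>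
   (real^'n1) \<times> (real^'n2) \<times> (real^'n2) \<times> (real^'n1) \<Rightarrow>
   (real^'n1) \<times> (real^'n2) \<times> (real^'n2) \<times> (real^'n1)" where
  "game_F R1 R2 e1 e2 gnu1 gnu2 gpD1 gpD2 z =
     (case z of (\<pi>1, \<pi>2, p1, p2) \<Rightarrow>
       (- (R1 *v p1) + e1 *\<^sub>R gnu1 \<pi>1,
        - (R2 *v p2) + e2 *\<^sub>R gnu2 \<pi>2,
        transpose R1 *v \<pi>1 + gpD1 p1 \<pi>2,
        transpose R2 *v \<pi>2 + gpD2 p2 \<pi>1))"

definition joint_set :: "((real^('n1::finite)) \<times> (real^('n2::finite)) \<times> (real^'n2) \<times> (real^'n1)) set" where
  "joint_set = prob_simplex \<times> prob_simplex \<times> prob_simplex \<times> prob_simplex"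

definition strongly_monotone_game where
  "strongly_monotone_game R1 R2 e1 e2 gnu1 gnu2 gpD1 gpD2 a \<longleftrightarrow>
     (\<forall>z\<in>joint_set. \<forall>z'\<in>joint_set.
        (z - z') \<bullet> (game_F R1 R2 e1 e2 gnu1 gnu2 gpD1 gpD2 z - game_F R1 R2 e1 e2 gnu1 gnu2 gpD1 gpD2 z')
          \<ge> a * (norm (z - z'))\<^sup>2)"

end

theory Submission
  imports Defs
begin
lemma grad_ineq:
  fixes f :: "'a::real_normed_vector \<Rightarrow> real"
  assumes cv: "convex_on C f" and xC: "x \<in> C" and yC: "y \<in> C"
    and fd: "(f has_derivative f') (at x)"
  shows "f' (y - x) \<le> f y - f x"
proof (rule field_le_epsilon)
  fix e :: real assume e: "0 < e"
  have bl: "bounded_linear f'" using fd has_derivative_bounded_linear by blast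
  define c where "c = norm (y - x) + 1"
  have c: "c > 0" "norm (y - x) \<le> c" unfolding c_def using norm_ge_zero[of "y - x"] by linarith+
  obtain d where d: "d > 0" and dd: "\<And>z. norm (z - x) < d \<Longrightarrow> norm (f z - f x - f' (z - x)) \<le> (e / c) * norm (z - x)"
    using fd e c unfolding has_derivative_at_alt by (meson divide_pos_pos)
  define s where "s = min (1/2) (d / (2 * c))"
  have s: "0 < s" "s < 1" using d c unfolding s_def by auto
  have s2: "s \<le> d / (2 * c)" unfolding s_def by simp
  have "s * c \<le> d / (2 * c) * c" using s2 c by (intro mult_right_mono) auto
  also have "\<dots> = d / 2" using c by simp
  finally have sd: "s * c < d" using d by linarith
  have eq: "(1 - s) *\<^sub>R x + s *\<^sub>R y = x + s *\<^sub>R (y - x)" by (simp add: algebra_simps)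
  have cvx: "f (x + s *\<^sub>R (y - x)) \<le> (1 - s) * f x + s * f y"
    using convex_onD[OF cv, of s x y] xC yC s eq by auto
  have n: "norm (s *\<^sub>R (y - x)) = s * norm (y - x)" using s by simp
  have "s * norm (y - x) \<le> s * c" using s c by (intro mult_left_mono) auto
  then have "norm (s *\<^sub>R (y - x)) < d" using n sd by linarith
  then have A: "norm (f (x + s *\<^sub>R (y - x)) - f x - f' (s *\<^sub>R (y - x))) \<le> (e / c) * (s * norm (y - x))"
    using dd[of "x + s *\<^sub>R (y - x)"] n by (simp only: add_diff_cancel_left')
  have B: "f' (s *\<^sub>R (y - x)) = s * f' (y - x)"
    using linear_scale[OF bounded_linear.linear[OF bl]] by simp
  have C: "(e / c) * (s * norm (y - x)) \<le> s * e"
  proof -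
    have "(e/c) * norm (y - x) \<le> (e/c) * c" using c e by (intro mult_left_mono) auto
    then have "(e/c) * norm (y - x) \<le> e" using c by simp
    then have "s * ((e/c) * norm (y - x)) \<le> s * e" using s by (intro mult_left_mono) auto
    then show ?thesis by (simp add: ac_simps)
  qed
  have "s * f' (y - x) \<le> s * (f y - f x + e)" 
    using A B C cvx unfolding real_norm_def abs_le_iff by (simp add: algebra_simps)
  then show "f' (y - x) \<le> f y - f x + e" using s by simp
qed
lemma hess_aux:
  fixes f :: "'a::real_inner \<Rightarrow> real" and g :: "'a \<Rightarrow> 'a"
  assumes S: "open S" "z \<in> S"
    and fd: "\<And>x. x \<in> S \<Longrightarrow> (f has_derivative (\<lambda>h. g x \<bullet> h)) (at x)"
    and gd: "(g has_derivative G) (at z)"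
    and e: "e > 0"
  shows "\<exists>d>0. \<forall>t. 0 < t \<and> t < d \<longrightarrow>
    \<bar>f (z + t *\<^sub>R h + t *\<^sub>R k) - f (z + t *\<^sub>R h) - f (z + t *\<^sub>R k) + f z - t\<^sup>2 * (G h \<bullet> k)\<bar> \<le> e * t\<^sup>2"
proof -
  have bl: "bounded_linear G" using gd has_derivative_bounded_linear by blast
  define C where "C = norm h + 2 * norm k + 1"
  define K where "K = norm k + 1"
  have C: "C > 0" "norm h + norm k + norm k \<le> C" unfolding C_def using norm_ge_zero[of h] norm_ge_zero[of k] by linarith+
  have K: "K > 0" "norm k \<le> K" unfolding K_def using norm_ge_zero[of k] by linarith+
  define e' where "e' = e / (C * K)"
  have e': "e' > 0" unfolding e'_def using e C K by simp
  obtain d1 where d1: "d1 > 0" and dd: "\<And>y. norm (y - z) < d1 \<Longrightarrow> norm (g y - g z - G (y - z)) \<le> e' * norm (y - z)"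
    using gd e' unfolding has_derivative_at_alt by meson
  obtain r where r: "r > 0" and rS: "ball z r \<subseteq> S" using S openE by blast
  define d where "d = min d1 r / C"
  have d: "d > 0" unfolding d_def using d1 r C by simp
  show ?thesis
  proof (intro exI[of _ d] conjI allI impI d)
    fix t :: real assume t: "0 < t \<and> t < d"
    have "t * C < d * C" using t C by simp
    also have "d * C = min d1 r" unfolding d_def using C by simp
    finally have tC: "t * C < min d1 r" .
    have tC2: "t * (norm h + norm k) < min d1 r"
    proof -
      have "norm h + norm k \<le> C" using C(2) norm_ge_zero[of k] by linarith
      then have "t * (norm h + norm k) \<le> t * C" using t by (intro mult_left_mono) auto
      then show ?thesis using tC by linarith
    qed
    define P where "P s = z + t *\<^sub>R h + s *\<^sub>R k" for s
    define Q where "Q s = z + s *\<^sub>R k" for s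
    have nP: "norm (P s - z) < min d1 r" if "0 \<le> s" "s \<le> t" for s
    proof -
      have "norm (P s - z) = norm (t *\<^sub>R h + s *\<^sub>R k)" unfolding P_def by (simp add: algebra_simps)
      also have "\<dots> \<le> t * norm h + s * norm k" using norm_triangle_ineq[of "t *\<^sub>R h" "s *\<^sub>R k"] t that by simp
      also have "\<dots> \<le> t * norm h + t * norm k" using that by (simp add: mult_right_mono)
      finally show ?thesis using tC2 by (simp add: distrib_left)
    qed
    have nQ: "norm (Q s - z) < min d1 r" if "0 \<le> s" "s \<le> t" for s
    proof -
      have "norm (Q s - z) = s * norm k" unfolding Q_def using that by simp
      also have "\<dots> \<le> t * (norm h + norm k)" using that t
        by (smt (verit, best) mult_left_mono mult_right_mono norm_ge_zero)
      finally show ?thesis using tC2 by linarith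
    qed
    have PS: "P s \<in> S" and QS: "Q s \<in> S" if "0 \<le> s" "s \<le> t" for s
      using nP[OF that] nQ[OF that] rS by (auto simp: dist_norm norm_minus_commute subset_iff)
    define \<phi> where "\<phi> s = f (P s) - f (Q s)" for s
    have der: "(\<phi> has_derivative (\<lambda>u. g (P s) \<bullet> (u *\<^sub>R k) - g (Q s) \<bullet> (u *\<^sub>R k))) (at s within {0..t})"
      if "0 \<le> s" "s \<le> t" for s
    proof -
      have dP: "(P has_derivative (\<lambda>u. u *\<^sub>R k)) (at s)" unfolding P_def
        by (auto intro!: derivative_eq_intros)
      have dQ: "(Q has_derivative (\<lambda>u. u *\<^sub>R k)) (at s)" unfolding Q_def
        by (auto intro!: derivative_eq_intros)
      have fP: "((f \<circ> P) has_derivative ((\<lambda>h. g (P s) \<bullet> h) \<circ> (\<lambda>u. u *\<^sub>R k))) (at s)"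
        using diff_chain_at[OF dP fd[OF PS[OF that]]] .
      have fQ: "((f \<circ> Q) has_derivative ((\<lambda>h. g (Q s) \<bullet> h) \<circ> (\<lambda>u. u *\<^sub>R k))) (at s)"
        using diff_chain_at[OF dQ fd[OF QS[OF that]]] .
      have "(\<phi> has_derivative (\<lambda>u. g (P s) \<bullet> (u *\<^sub>R k) - g (Q s) \<bullet> (u *\<^sub>R k))) (at s)"
        using has_derivative_diff[OF fP fQ] unfolding \<phi>_def o_def by simp
      then show ?thesis by (rule has_derivative_at_withinI)
    qed
    obtain \<sigma> where \<sigma>: "0 < \<sigma>" "\<sigma> < t"
      and mv: "\<phi> t - \<phi> 0 = g (P \<sigma>) \<bullet> ((t - 0) *\<^sub>R k) - g (Q \<sigma>) \<bullet> ((t - 0) *\<^sub>R k)"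
      using mvt_simple[of 0 t \<phi> "\<lambda>s u. g (P s) \<bullet> (u *\<^sub>R k) - g (Q s) \<bullet> (u *\<^sub>R k)"] t der by auto
    define u1 where "u1 = t *\<^sub>R h + \<sigma> *\<^sub>R k"
    define u2 where "u2 = \<sigma> *\<^sub>R k"
    have Pu: "P \<sigma> = z + u1" unfolding P_def u1_def by (simp add: algebra_simps)
    have Qu: "Q \<sigma> = z + u2" unfolding Q_def u2_def by simp
    define r1 where "r1 = g (z + u1) - g z - G u1"
    define r2 where "r2 = g (z + u2) - g z - G u2"
    have Glin: "G u1 - G u2 = t *\<^sub>R G h" unfolding u1_def u2_def
      using linear_add[OF bounded_linear.linear[OF bl]] linear_scale[OF bounded_linear.linear[OF bl]] by simp
    have key: "g (P \<sigma>) - g (Q \<sigma>) - t *\<^sub>R G h = r1 - r2"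
      unfolding Pu Qu r1_def r2_def using Glin by (simp add: algebra_simps)
    have n1: "norm r1 \<le> e' * (t * (norm h + norm k))"
    proof -
      have "norm u1 = norm (P \<sigma> - z)" using Pu by simp
      then have "norm u1 < d1" using nP[of \<sigma>] \<sigma> by auto
      then have "norm r1 \<le> e' * norm u1" unfolding r1_def using dd[of "z + u1"] by simp
      also have "norm u1 \<le> t * norm h + \<sigma> * norm k" unfolding u1_def
        using norm_triangle_ineq[of "t *\<^sub>R h" "\<sigma> *\<^sub>R k"] t \<sigma> by simp
      also have "\<dots> \<le> t * (norm h + norm k)" using \<sigma> by (simp add: distrib_left mult_right_mono)
      finally show ?thesis using e' by (simp add: mult_left_mono)
    qed
    have n2: "norm r2 \<le> e' * (t * norm k)"
    proof -
      have "norm u2 = norm (Q \<sigma> - z)" using Qu by simp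
      then have "norm u2 < d1" using nQ[of \<sigma>] \<sigma> by auto
      then have "norm r2 \<le> e' * norm u2" unfolding r2_def using dd[of "z + u2"] by simp
      also have "norm u2 \<le> t * norm k" unfolding u2_def using \<sigma> by (simp add: mult_right_mono)
      finally show ?thesis using e' by (simp add: mult_left_mono)
    qed
    have n12: "norm (r1 - r2) \<le> e' * t * C"
    proof -
      have "norm (r1 - r2) \<le> norm r1 + norm r2" by (rule norm_triangle_ineq4)
      also have "\<dots> \<le> e' * (t * (norm h + norm k)) + e' * (t * norm k)" using n1 n2 by linarith
      also have "\<dots> = e' * t * (norm h + norm k + norm k)" by (simp add: algebra_simps)
      also have "\<dots> \<le> e' * t * C" using C e' t by (intro mult_left_mono) auto
      finally show ?thesis .
    qed
    have Deq: "f (z + t *\<^sub>R h + t *\<^sub>R k) - f (z + t *\<^sub>R h) - f (z + t *\<^sub>R k) + f z - t\<^sup>2 * (G h \<bullet> k)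
       = t * ((r1 - r2) \<bullet> k)"
    proof -
      have "f (z + t *\<^sub>R h + t *\<^sub>R k) - f (z + t *\<^sub>R h) - f (z + t *\<^sub>R k) + f z = \<phi> t - \<phi> 0"
        unfolding \<phi>_def P_def Q_def by simp
      also have "\<dots> = t * ((g (P \<sigma>) - g (Q \<sigma>)) \<bullet> k)" using mv by (simp add: inner_diff_left right_diff_distrib)
      finally have "f (z + t *\<^sub>R h + t *\<^sub>R k) - f (z + t *\<^sub>R h) - f (z + t *\<^sub>R k) + f z
          = t * ((g (P \<sigma>) - g (Q \<sigma>)) \<bullet> k)" .
      moreover have "(g (P \<sigma>) - g (Q \<sigma>)) \<bullet> k = (r1 - r2) \<bullet> k + t * (G h \<bullet> k)"
        using arg_cong[OF key, of "\<lambda>v. v \<bullet> k"] by (simp add: inner_diff_left)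
      ultimately have "f (z + t *\<^sub>R h + t *\<^sub>R k) - f (z + t *\<^sub>R h) - f (z + t *\<^sub>R k) + f z
          = t * ((r1 - r2) \<bullet> k + t * (G h \<bullet> k))" by simp
      then show ?thesis by (simp add: algebra_simps power2_eq_square)
    qed
    have "\<bar>(r1 - r2) \<bullet> k\<bar> \<le> norm (r1 - r2) * norm k" by (rule Cauchy_Schwarz_ineq2)
    also have "\<dots> \<le> (e' * t * C) * K" using n12 K e' t C by (intro mult_mono) auto
    also have "\<dots> = e * t" unfolding e'_def using C K by simp
    finally have "\<bar>t * ((r1 - r2) \<bullet> k)\<bar> \<le> t * (e * t)" using t by (simp add: abs_mult mult_left_mono)
    then show "\<bar>f (z + t *\<^sub>R h + t *\<^sub>R k) - f (z + t *\<^sub>R h) - f (z + t *\<^sub>R k) + f z - t\<^sup>2 * (G h \<bullet> k)\<bar> \<le> e * t\<^sup>2"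
      unfolding Deq by (simp add: power2_eq_square ac_simps)
  qed
qed

lemma hess_sym:
  fixes f :: "'a::real_inner \<Rightarrow> real" and g :: "'a \<Rightarrow> 'a"
  assumes S: "open S" "z \<in> S"
    and fd: "\<And>x. x \<in> S \<Longrightarrow> (f has_derivative (\<lambda>h. g x \<bullet> h)) (at x)"
    and gd: "(g has_derivative G) (at z)"
  shows "G h \<bullet> k = G k \<bullet> h"
proof -
  have "\<bar>G h \<bullet> k - G k \<bullet> h\<bar> \<le> 2 * e" if e: "e > 0" for e
  proof -
    obtain d1 where d1: "d1 > 0" and A: "\<forall>t. 0 < t \<and> t < d1 \<longrightarrow>
      \<bar>f (z + t *\<^sub>R h + t *\<^sub>R k) - f (z + t *\<^sub>R h) - f (z + t *\<^sub>R k) + f z - t\<^sup>2 * (G h \<bullet> k)\<bar> \<le> e * t\<^sup>2"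
      using hess_aux[OF S fd gd e, of h k] by blast
    obtain d2 where d2: "d2 > 0" and B: "\<forall>t. 0 < t \<and> t < d2 \<longrightarrow>
      \<bar>f (z + t *\<^sub>R k + t *\<^sub>R h) - f (z + t *\<^sub>R k) - f (z + t *\<^sub>R h) + f z - t\<^sup>2 * (G k \<bullet> h)\<bar> \<le> e * t\<^sup>2"
      using hess_aux[OF S fd gd e, of k h] by blast
    define t where "t = min d1 d2 / 2"
    have t: "0 < t" "t < d1" "t < d2" unfolding t_def using d1 d2 by auto
    have sw: "z + t *\<^sub>R k + t *\<^sub>R h = z + t *\<^sub>R h + t *\<^sub>R k" by (simp add: algebra_simps)
    have "\<bar>t\<^sup>2 * (G h \<bullet> k) - t\<^sup>2 * (G k \<bullet> h)\<bar> \<le> 2 * e * t\<^sup>2"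
      using A[rule_format, of t] B[rule_format, of t] t unfolding sw by linarith
    moreover have "\<bar>t\<^sup>2 * (G h \<bullet> k) - t\<^sup>2 * (G k \<bullet> h)\<bar> = t\<^sup>2 * \<bar>G h \<bullet> k - G k \<bullet> h\<bar>"
      by (simp add: abs_mult right_diff_distrib[symmetric])
    ultimately have "t\<^sup>2 * \<bar>G h \<bullet> k - G k \<bullet> h\<bar> \<le> t\<^sup>2 * (2 * e)" by (simp add: ac_simps)
    then show ?thesis using t by (simp add: mult_le_cancel_left)
  qed
  then have "\<bar>G h \<bullet> k - G k \<bullet> h\<bar> \<le> 0"
    using field_le_epsilon[of "\<bar>G h \<bullet> k - G k \<bullet> h\<bar>" 0]
    by (metis add.left_neutral field_sum_of_halves mult_2 half_gt_zero)
  then show ?thesis by simp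
qed

lemma tendsto_quad:
  fixes M :: "'b \<Rightarrow> real^'n::finite^'n"
  shows "(M \<longlongrightarrow> N) F \<Longrightarrow> ((\<lambda>s. v \<bullet> (M s *v v)) \<longlongrightarrow> v \<bullet> (N *v v)) F"
  by (auto intro!: tendsto_intros simp: matrix_vector_mult_def inner_vec_def)

lemma simplex_comb:
  assumes "x \<in> prob_simplex" "y \<in> prob_simplex" "0 \<le> t" "t \<le> 1"
  shows "y + t *\<^sub>R (x - y) \<in> prob_simplex"
proof -
  have c: "(y + t *\<^sub>R (x - y)) $ i = (1 - t) * y $ i + t * x $ i" for i by (simp add: algebra_simps)
  have "0 \<le> (y + t *\<^sub>R (x - y)) $ i" for i
    using assms unfolding c prob_simplex_def by auto
  moreover have "(\<Sum>i\<in>UNIV. (y + t *\<^sub>R (x - y)) $ i) = 1"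
    using assms unfolding c prob_simplex_def by (simp add: sum.distrib sum_distrib_left[symmetric])
  ultimately show ?thesis unfolding prob_simplex_def by auto
qed

lemma simplex_diff_sum:
  assumes "x \<in> prob_simplex" "y \<in> prob_simplex"
  shows "(\<Sum>i\<in>UNIV. (x - y) $ i) = 0"
  using assms unfolding prob_simplex_def by (simp add: sum_subtractf)

definition unif :: "real^'n::finite" where "unif = (\<chi> i. 1 / real CARD('n))"

lemma unif_simplex: "unif \<in> prob_simplex"
  unfolding prob_simplex_def unif_def by simp

lemma psd_interior:
  fixes G :: "real^'n::finite \<Rightarrow> real^'n" and M :: "real^'n \<Rightarrow> real^'n^'n"
  assumes Gd: "(G has_derivative (\<lambda>h. M x *v h)) (at x)"
    and mono: "\<And>y. y \<in> prob_simplex \<Longrightarrow> a * (norm (y - x))\<^sup>2 \<le> (y - x) \<bullet> (G y - G x)"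
    and xs: "x \<in> prob_simplex" and pos: "\<forall>i. 0 < x $ i"
  shows "psd_ge (M x) a"
  unfolding psd_ge_def
proof (intro allI impI)
  fix v :: "real^'n" assume v: "(\<Sum>i\<in>UNIV. v $ i) = 0"
  show "a * (v \<bullet> v) \<le> v \<bullet> (M x *v v)"
  proof (rule field_le_epsilon)
    fix e :: real assume e: "e > 0"
    define c where "c = v \<bullet> v + 1"
    have c: "c > 0" "norm v * norm v \<le> c" unfolding c_def
      by (auto simp: power2_norm_eq_inner[symmetric] power2_eq_square add_pos_nonneg
          intro: add_nonneg_pos)
    obtain d where d: "d > 0" and dd: "\<And>y. norm (y - x) < d \<Longrightarrow> norm (G y - G x - M x *v (y - x)) \<le> (e / c) * norm (y - x)"
      using Gd e c unfolding has_derivative_at_alt by (meson divide_pos_pos)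
    define m where "m = Min (range (\<lambda>i. x $ i))"
    have m: "m > 0" unfolding m_def using pos by (simp add: Min_gr_iff)
    have mx: "m \<le> x $ i" for i unfolding m_def by (rule Min_le) auto
    define t where "t = (min m d / 2) / (norm v + 1)"
    have nv: "norm v + 1 > 0" using norm_ge_zero[of v] by linarith
    have t: "t > 0" unfolding t_def using m d nv by simp
    have tnv: "t * norm v < m" "t * norm v < d"
    proof -
      have "t * (norm v + 1) = min m d / 2"
        unfolding t_def using nv by (metis divide_eq_eq less_irrefl)
      then have "t * norm v + t = min m d / 2" by (simp add: algebra_simps)
      then show "t * norm v < m" "t * norm v < d" using t m d by auto
    qed
    define y where "y = x + t *\<^sub>R v"
    have ys: "y \<in> prob_simplex"
    proof -
      have "0 \<le> y $ i" for i
      proof -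
        have "\<bar>t * v $ i\<bar> \<le> t * norm v" using component_le_norm_cart[of v i] t by (simp add: abs_mult)
        then show ?thesis unfolding y_def using mx[of i] tnv by simp
      qed
      moreover have "(\<Sum>i\<in>UNIV. y $ i) = 1" using xs v unfolding y_def prob_simplex_def
        by (simp add: sum.distrib sum_distrib_left[symmetric])
      ultimately show ?thesis unfolding prob_simplex_def by auto
    qed
    have yx: "y - x = t *\<^sub>R v" unfolding y_def by simp
    have nyx: "norm (y - x) = t * norm v" using yx t by simp
    have A: "a * (t * t * (v \<bullet> v)) \<le> t * (v \<bullet> (G y - G x))"
    proof -
      have "(norm (y - x))\<^sup>2 = t * t * (v \<bullet> v)" using nyx
        by (simp add: power2_eq_square power2_norm_eq_inner[symmetric])
      then show ?thesis using mono[OF ys] unfolding yx by simp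
    qed
    have B: "norm (G y - G x - t *\<^sub>R (M x *v v)) \<le> (e / c) * (t * norm v)"
      using dd[of y] nyx tnv yx t by (simp add: matrix_vector_mult_scaleR)
    have "v \<bullet> (G y - G x - t *\<^sub>R (M x *v v)) \<le> norm v * norm (G y - G x - t *\<^sub>R (M x *v v))"
      by (rule norm_cauchy_schwarz)
    also have "\<dots> \<le> norm v * ((e / c) * (t * norm v))" using B by (intro mult_left_mono) auto
    also have "\<dots> = t * ((e / c) * (norm v * norm v))" by (simp add: ac_simps)
    also have "\<dots> \<le> t * e"
    proof -
      have "(e / c) * (norm v * norm v) \<le> (e / c) * c" using c e by (intro mult_left_mono) auto
      also have "(e / c) * c = e" using c by simp
      finally have h: "(e / c) * (norm v * norm v) \<le> e" .
      show ?thesis using mult_left_mono[OF h, of t] t by linarith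
    qed
    finally have C: "v \<bullet> (G y - G x) \<le> t * (v \<bullet> (M x *v v)) + t * e"
      by (simp add: inner_diff_right)
    have "t * (t * (a * (v \<bullet> v))) \<le> t * (t * (v \<bullet> (M x *v v) + e))"
      using A C t by (smt (verit) mult_left_mono distrib_left mult.assoc mult.commute)
    then show "a * (v \<bullet> v) \<le> v \<bullet> (M x *v v) + e" using t by simp
  qed
qed

lemma psd_from_mono:
  fixes G :: "real^'n::finite \<Rightarrow> real^'n" and M :: "real^'n \<Rightarrow> real^'n^'n"
  assumes U: "open U" "prob_simplex \<subseteq> U"
    and Gd: "\<And>x. x \<in> U \<Longrightarrow> (G has_derivative (\<lambda>h. M x *v h)) (at x)"
    and Mc: "continuous_on U M"
    and mono: "\<And>x y. x \<in> prob_simplex \<Longrightarrow> y \<in> prob_simplex \<Longrightarrow> a * (norm (y - x))\<^sup>2 \<le> (y - x) \<bullet> (G y - G x)"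
    and xs: "x \<in> prob_simplex"
  shows "psd_ge (M x) a"
  unfolding psd_ge_def
proof (intro allI impI)
  fix v :: "real^'n" assume v: "(\<Sum>i\<in>UNIV. v $ i) = 0"
  define X where "X s = x + s *\<^sub>R (unif - x)" for s :: real
  have Xin: "X s \<in> prob_simplex" if "0 < s" "s < 1" for s
    unfolding X_def using simplex_comb[OF unif_simplex xs, of s] that by simp
  have Xpos: "\<forall>i. 0 < X s $ i" if "0 < s" "s < 1" for s
  proof
    fix i
    have "X s $ i = (1 - s) * x $ i + s * (1 / real CARD('n))" unfolding X_def unif_def by (simp add: algebra_simps)
    moreover have "0 \<le> x $ i" using xs unfolding prob_simplex_def by auto
    ultimately show "0 < X s $ i" using that by (simp add: add_nonneg_pos)
  qed
  have ev: "\<forall>\<^sub>F s in at_right 0. a * (v \<bullet> v) \<le> v \<bullet> (M (X s) *v v)"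
  proof (rule eventually_at_rightI[of 0 1])
    fix s :: real assume s: "s \<in> {0<..<1}"
    have s01: "0 < s" "s < 1" using s by auto
    have XU: "X s \<in> U" using U(2) Xin[OF s01] by auto
    have "psd_ge (M (X s)) a"
      by (rule psd_interior[where G=G and M=M and x="X s" and a=a, OF Gd[OF XU] mono[OF Xin[OF s01]] Xin[OF s01] Xpos[OF s01]])
    then show "a * (v \<bullet> v) \<le> v \<bullet> (M (X s) *v v)" unfolding psd_ge_def using v by auto
  qed simp
  have "(X \<longlongrightarrow> x) (at_right 0)"
  proof -
    have "((\<lambda>s. x + s *\<^sub>R (unif - x)) \<longlongrightarrow> x + 0 *\<^sub>R (unif - x)) (at_right (0::real))"
      by (intro tendsto_intros)
    then show ?thesis unfolding X_def by simp
  qed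
  moreover have "isCont M x" using Mc U xs continuous_on_eq_continuous_at by blast
  ultimately have "((\<lambda>s. M (X s)) \<longlongrightarrow> M x) (at_right 0)"
    using isCont_tendsto_compose by blast
  then have "((\<lambda>s. v \<bullet> (M (X s) *v v)) \<longlongrightarrow> v \<bullet> (M x *v v)) (at_right 0)"
    by (rule tendsto_quad)
  then show "a * (v \<bullet> v) \<le> v \<bullet> (M x *v v)"
    using tendsto_lowerbound ev by (metis trivial_limit_at_right_real)
qed

lemma pair_ineq:
  fixes D :: "real^'n::finite \<Rightarrow> real^'n \<Rightarrow> real" and gp gq :: "real^'n \<Rightarrow> real^'n \<Rightarrow> real^'n"
    and Hpp Hpq Hqp Hqq :: "real^'n \<Rightarrow> real^'n \<Rightarrow> real^'n^'n"
    and \<nu> :: "real^'n \<Rightarrow> real" and g\<nu> :: "real^'n \<Rightarrow> real^'n" and H\<nu> :: "real^'n \<Rightarrow> real^'n^'n"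
  assumes V: "prob_simplex \<times> prob_simplex \<subseteq> V" and C2D: "C2_on2 V D gp gq Hpp Hpq Hqp Hqq"
    and cvx: "convex_on (prob_simplex \<times> prob_simplex) (\<lambda>w. D (fst w) (snd w))"
    and U: "prob_simplex \<subseteq> U" and C2n: "C2_on U \<nu> g\<nu> H\<nu>"
    and cond: "\<forall>q\<in>prob_simplex. \<forall>p\<in>prob_simplex.
        psd_ge (\<epsilon> *\<^sub>R H\<nu> q - (1/2) *\<^sub>R Hqq p q) \<alpha> \<and> psd_ge ((1/2) *\<^sub>R Hpp p q) \<alpha>"
    and ps: "p \<in> prob_simplex" "p' \<in> prob_simplex" "q \<in> prob_simplex" "q' \<in> prob_simplex"
  shows "\<alpha> * ((norm (p - p'))\<^sup>2 + (norm (q - q'))\<^sup>2)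
     \<le> (p - p') \<bullet> (gp p q - gp p' q') + (q - q') \<bullet> (\<epsilon> *\<^sub>R g\<nu> q - \<epsilon> *\<^sub>R g\<nu> q')"
proof -
  have oV: "open V" and dD: "\<And>z. z \<in> V \<Longrightarrow> ((\<lambda>w. D (fst w) (snd w)) has_derivative
            (\<lambda>h. gp (fst z) (snd z) \<bullet> fst h + gq (fst z) (snd z) \<bullet> snd h)) (at z)"
    and dgp: "\<And>z. z \<in> V \<Longrightarrow> ((\<lambda>w. gp (fst w) (snd w)) has_derivative
            (\<lambda>h. Hpp (fst z) (snd z) *v fst h + Hpq (fst z) (snd z) *v snd h)) (at z)"
    and dgq: "\<And>z. z \<in> V \<Longrightarrow> ((\<lambda>w. gq (fst w) (snd w)) has_derivative
            (\<lambda>h. Hqp (fst z) (snd z) *v fst h + Hqq (fst z) (snd z) *v snd h)) (at z)"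
    using C2D unfolding C2_on2_def by auto
  have dg\<nu>: "\<And>x. x \<in> U \<Longrightarrow> (g\<nu> has_derivative (\<lambda>h. H\<nu> x *v h)) (at x)"
    using C2n unfolding C2_on_def by auto
  define a where "a = p - p'"
  define b where "b = q - q'"
  have sa: "(\<Sum>i\<in>UNIV. a $ i) = 0" unfolding a_def by (rule simplex_diff_sum[OF ps(1,2)])
  have sb: "(\<Sum>i\<in>UNIV. b $ i) = 0" unfolding b_def by (rule simplex_diff_sum[OF ps(3,4)])
  have g1: "gp p' q' \<bullet> a + gq p' q' \<bullet> b \<le> D p q - D p' q'"
  proof -
    have m: "(p', q') \<in> prob_simplex \<times> prob_simplex" "(p, q) \<in> prob_simplex \<times> prob_simplex" using ps by auto
    have "(p', q') \<in> V" using m V by auto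
    from grad_ineq[OF cvx m dD[OF this]] show ?thesis unfolding a_def b_def by simp
  qed
  have g2: "gp p q \<bullet> (-a) + gq p q \<bullet> (-b) \<le> D p' q' - D p q"
  proof -
    have m: "(p, q) \<in> prob_simplex \<times> prob_simplex" "(p', q') \<in> prob_simplex \<times> prob_simplex" using ps by auto
    have "(p, q) \<in> V" using m V by auto
    from grad_ineq[OF cvx m dD[OF this]] show ?thesis unfolding a_def b_def by simp
  qed
  have S1: "0 \<le> a \<bullet> (gp p q - gp p' q') + b \<bullet> (gq p q - gq p' q')"
    using g1 g2 by (simp add: inner_diff_right inner_commute)
  \<comment> \<open>Step 2: monotone auxiliary function along the segment\<close>
  define P where "P t = p' + t *\<^sub>R a" for t :: real
  define Q where "Q t = q' + t *\<^sub>R b" for t :: real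
  have PQs: "P t \<in> prob_simplex" "Q t \<in> prob_simplex" if "0 \<le> t" "t \<le> 1" for t
    unfolding P_def Q_def a_def b_def using simplex_comb ps that by auto
  define c where "c = a \<bullet> a + b \<bullet> b"
  define \<Psi> where "\<Psi> t = (1/2) * (a \<bullet> gp (P t) (Q t)) - (1/2) * (b \<bullet> gq (P t) (Q t))
      + \<epsilon> * (b \<bullet> g\<nu> (Q t)) - \<alpha> * t * c" for t
  define \<Psi>' where "\<Psi>' t u = (1/2) * (a \<bullet> (Hpp (P t) (Q t) *v (u *\<^sub>R a) + Hpq (P t) (Q t) *v (u *\<^sub>R b)))
      - (1/2) * (b \<bullet> (Hqp (P t) (Q t) *v (u *\<^sub>R a) + Hqq (P t) (Q t) *v (u *\<^sub>R b)))
      + \<epsilon> * (b \<bullet> (H\<nu> (Q t) *v (u *\<^sub>R b))) - \<alpha> * u * c" for t u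
  have der: "(\<Psi> has_derivative \<Psi>' t) (at t within {0..1})" if t: "0 \<le> t" "t \<le> 1" for t
  proof -
    have zV: "(P t, Q t) \<in> V" using PQs[OF t] V by auto
    have qU: "Q t \<in> U" using PQs[OF t] U by auto
    have d\<gamma>: "((\<lambda>t. (P t, Q t)) has_derivative (\<lambda>u. (u *\<^sub>R a, u *\<^sub>R b))) (at t)"
      unfolding P_def Q_def by (auto intro!: derivative_eq_intros)
    have dQ: "(Q has_derivative (\<lambda>u. u *\<^sub>R b)) (at t)"
      unfolding Q_def by (auto intro!: derivative_eq_intros)
    have A0: "((\<lambda>t. gp (P t) (Q t)) has_derivative (\<lambda>u. Hpp (P t) (Q t) *v (u *\<^sub>R a) + Hpq (P t) (Q t) *v (u *\<^sub>R b))) (at t)"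
      using diff_chain_at[OF d\<gamma> dgp[OF zV]] by (simp add: o_def)
    have B0: "((\<lambda>t. gq (P t) (Q t)) has_derivative (\<lambda>u. Hqp (P t) (Q t) *v (u *\<^sub>R a) + Hqq (P t) (Q t) *v (u *\<^sub>R b))) (at t)"
      using diff_chain_at[OF d\<gamma> dgq[OF zV]] by (simp add: o_def)
    have C0: "((\<lambda>t. g\<nu> (Q t)) has_derivative (\<lambda>u. H\<nu> (Q t) *v (u *\<^sub>R b))) (at t)"
      using diff_chain_at[OF dQ dg\<nu>[OF qU]] by (simp add: o_def)
    have A: "((\<lambda>t. (1/2) * (a \<bullet> gp (P t) (Q t))) has_derivative (\<lambda>u. (1/2) * (a \<bullet> (Hpp (P t) (Q t) *v (u *\<^sub>R a) + Hpq (P t) (Q t) *v (u *\<^sub>R b))))) (at t)"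
      by (rule has_derivative_mult_right[OF has_derivative_inner_right[OF A0]])
    have B: "((\<lambda>t. (1/2) * (b \<bullet> gq (P t) (Q t))) has_derivative (\<lambda>u. (1/2) * (b \<bullet> (Hqp (P t) (Q t) *v (u *\<^sub>R a) + Hqq (P t) (Q t) *v (u *\<^sub>R b))))) (at t)"
      by (rule has_derivative_mult_right[OF has_derivative_inner_right[OF B0]])
    have C: "((\<lambda>t. \<epsilon> * (b \<bullet> g\<nu> (Q t))) has_derivative (\<lambda>u. \<epsilon> * (b \<bullet> (H\<nu> (Q t) *v (u *\<^sub>R b))))) (at t)"
      by (rule has_derivative_mult_right[OF has_derivative_inner_right[OF C0]])
    have E: "((\<lambda>t. \<alpha> * t * c) has_derivative (\<lambda>u. \<alpha> * u * c)) (at t)"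
      by (auto intro!: derivative_eq_intros)
    have "(\<Psi> has_derivative \<Psi>' t) (at t)"
      unfolding \<Psi>_def \<Psi>'_def
      by (rule has_derivative_diff[OF has_derivative_add[OF has_derivative_diff[OF A B] C] E])
    then show ?thesis by (rule has_derivative_at_withinI)
  qed
  obtain \<xi> where \<xi>: "\<xi> \<in> {0<..<1}" and mv: "\<Psi> 1 - \<Psi> 0 = \<Psi>' \<xi> (1 - 0)"
    using mvt_simple[of 0 1 \<Psi> \<Psi>'] der by auto
  have \<xi>01: "0 \<le> \<xi>" "\<xi> \<le> 1" using \<xi> by auto
  define z where "z = (P \<xi>, Q \<xi>)"
  have zV: "z \<in> V" using PQs[OF \<xi>01] V unfolding z_def by auto
  have sym: "(Hqp (P \<xi>) (Q \<xi>) *v a) \<bullet> b = (Hpq (P \<xi>) (Q \<xi>) *v b) \<bullet> a"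
  proof -
    have fd: "((\<lambda>w. D (fst w) (snd w)) has_derivative (\<lambda>h. (gp (fst x) (snd x), gq (fst x) (snd x)) \<bullet> h)) (at x)"
      if "x \<in> V" for x
      using dD[OF that] by (simp add: inner_prod_def)
    have gd: "((\<lambda>w. (gp (fst w) (snd w), gq (fst w) (snd w))) has_derivative
       (\<lambda>h. (Hpp (fst z) (snd z) *v fst h + Hpq (fst z) (snd z) *v snd h,
             Hqp (fst z) (snd z) *v fst h + Hqq (fst z) (snd z) *v snd h))) (at z)"
      by (rule has_derivative_Pair[OF dgp[OF zV] dgq[OF zV]])
    from hess_sym[OF oV zV fd gd, of "(a, 0)" "(0, b)"]
    show ?thesis unfolding z_def by simp
  qed
  have psd1: "\<alpha> * (a \<bullet> a) \<le> (1/2) * (a \<bullet> (Hpp (P \<xi>) (Q \<xi>) *v a))"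
    using cond PQs[OF \<xi>01] sa unfolding psd_ge_def
    by (auto simp: scaleR_matrix_vector_assoc[symmetric])
  have psd2: "\<alpha> * (b \<bullet> b) \<le> \<epsilon> * (b \<bullet> (H\<nu> (Q \<xi>) *v b)) - (1/2) * (b \<bullet> (Hqq (P \<xi>) (Q \<xi>) *v b))"
    using cond PQs[OF \<xi>01] sb unfolding psd_ge_def
    by (auto simp: scaleR_matrix_vector_assoc[symmetric] matrix_vector_mult_diff_rdistrib inner_diff_right)
  have "\<Psi>' \<xi> 1 = (1/2) * (a \<bullet> (Hpp (P \<xi>) (Q \<xi>) *v a)) + (1/2) * ((Hpq (P \<xi>) (Q \<xi>) *v b) \<bullet> a)
      - (1/2) * ((Hqp (P \<xi>) (Q \<xi>) *v a) \<bullet> b) - (1/2) * (b \<bullet> (Hqq (P \<xi>) (Q \<xi>) *v b))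
      + \<epsilon> * (b \<bullet> (H\<nu> (Q \<xi>) *v b)) - \<alpha> * c"
    unfolding \<Psi>'_def by (simp add: inner_add_right inner_commute algebra_simps)
  moreover have "\<alpha> * c = \<alpha> * (a \<bullet> a) + \<alpha> * (b \<bullet> b)" unfolding c_def by (simp add: distrib_left)
  ultimately have "\<Psi>' \<xi> 1 \<ge> 0" using psd1 psd2 sym by linarith
  then have mono: "\<Psi> 0 \<le> \<Psi> 1" using mv by simp
  have P01: "P 0 = p'" "P 1 = p" "Q 0 = q'" "Q 1 = q" unfolding P_def Q_def a_def b_def by auto
  have "(1/2) * (a \<bullet> gp p' q') - (1/2) * (b \<bullet> gq p' q') + \<epsilon> * (b \<bullet> g\<nu> q')
     \<le> (1/2) * (a \<bullet> gp p q) - (1/2) * (b \<bullet> gq p q) + \<epsilon> * (b \<bullet> g\<nu> q) - \<alpha> * c"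
    using mono unfolding \<Psi>_def P01 by simp
  moreover have "(norm (p - p'))\<^sup>2 + (norm (q - q'))\<^sup>2 = c"
    unfolding c_def a_def b_def by (simp add: power2_norm_eq_inner)
  ultimately show ?thesis using S1 unfolding a_def[symmetric] b_def[symmetric]
    by (simp add: inner_diff_right inner_scaleR_right algebra_simps)
qed

lemma psd_nu:
  fixes \<nu> :: "real^'n::finite \<Rightarrow> real" and g\<nu> :: "real^'n \<Rightarrow> real^'n" and H\<nu> :: "real^'n \<Rightarrow> real^'n^'n"
  assumes U: "prob_simplex \<subseteq> U" and C2: "C2_on U \<nu> g\<nu> H\<nu>"
    and mono: "\<And>x y. x \<in> prob_simplex \<Longrightarrow> y \<in> prob_simplex \<Longrightarrow>
       \<alpha> * (norm (y - x))\<^sup>2 \<le> (y - x) \<bullet> (\<epsilon> *\<^sub>R g\<nu> y - \<epsilon> *\<^sub>R g\<nu> x)"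
    and xs: "x \<in> prob_simplex"
  shows "psd_ge (\<epsilon> *\<^sub>R H\<nu> x) \<alpha>"
proof -
  have oU: "open U" and dg: "\<And>x. x \<in> U \<Longrightarrow> (g\<nu> has_derivative (\<lambda>h. H\<nu> x *v h)) (at x)"
    and Hc: "continuous_on U H\<nu>" using C2 unfolding C2_on_def by auto
  have Gd: "((\<lambda>x. \<epsilon> *\<^sub>R g\<nu> x) has_derivative (\<lambda>h. (\<epsilon> *\<^sub>R H\<nu> x) *v h)) (at x)" if "x \<in> U" for x
    using has_derivative_scaleR_right[OF dg[OF that], of \<epsilon>] by (simp add: scaleR_matrix_vector_assoc)
  have Mc: "continuous_on U (\<lambda>x. \<epsilon> *\<^sub>R H\<nu> x)" using Hc by (intro continuous_intros)
  show ?thesis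
    by (rule psd_from_mono[where G="\<lambda>x. \<epsilon> *\<^sub>R g\<nu> x" and M="\<lambda>x. \<epsilon> *\<^sub>R H\<nu> x", OF oU U Gd Mc mono xs])
qed

lemma psd_pp:
  fixes D :: "real^'n::finite \<Rightarrow> real^'n \<Rightarrow> real" and gp gq :: "real^'n \<Rightarrow> real^'n \<Rightarrow> real^'n"
    and Hpp Hpq Hqp Hqq :: "real^'n \<Rightarrow> real^'n \<Rightarrow> real^'n^'n"
  assumes V: "prob_simplex \<times> prob_simplex \<subseteq> V" and C2D: "C2_on2 V D gp gq Hpp Hpq Hqp Hqq"
    and mono: "\<And>x y. x \<in> prob_simplex \<Longrightarrow> y \<in> prob_simplex \<Longrightarrow>
       \<alpha> * (norm (y - x))\<^sup>2 \<le> (y - x) \<bullet> (gp y q - gp x q)"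
    and ps: "p \<in> prob_simplex" "q \<in> prob_simplex"
  shows "psd_ge (Hpp p q) \<alpha>"
proof -
  have oV: "open V"
    and dgp: "\<And>z. z \<in> V \<Longrightarrow> ((\<lambda>w. gp (fst w) (snd w)) has_derivative
            (\<lambda>h. Hpp (fst z) (snd z) *v fst h + Hpq (fst z) (snd z) *v snd h)) (at z)"
    and Hc: "continuous_on V (\<lambda>w. Hpp (fst w) (snd w))"
    using C2D unfolding C2_on2_def by auto
  define U where "U = (\<lambda>x. (x, q)) -` V"
  have oU: "open U" unfolding U_def
    by (rule open_vimage[OF oV]) (intro continuous_intros)
  have sU: "prob_simplex \<subseteq> U" unfolding U_def using V ps by auto
  have Gd: "((\<lambda>x. gp x q) has_derivative (\<lambda>h. Hpp x q *v h)) (at x)" if "x \<in> U" for x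
  proof -
    have xV: "(x, q) \<in> V" using that unfolding U_def by auto
    have d1: "((\<lambda>x. (x, q)) has_derivative (\<lambda>h. (h, 0))) (at x)"
      by (auto intro!: derivative_eq_intros)
    show ?thesis using diff_chain_at[OF d1 dgp[OF xV]] by (simp add: o_def)
  qed
  have Mc: "continuous_on U (\<lambda>x. Hpp x q)"
  proof -
    have "continuous_on U (\<lambda>x. (\<lambda>w. Hpp (fst w) (snd w)) ((\<lambda>x. (x, q)) x))"
      by (rule continuous_on_compose2[OF Hc]) (auto simp: U_def intro!: continuous_intros)
    then show ?thesis by simp
  qed
  show ?thesis
    by (rule psd_from_mono[where G="\<lambda>x. gp x q" and M="\<lambda>x. Hpp x q", OF oU sU Gd Mc mono ps(1)])
qed

lemma bil_cancel:
  fixes R :: "real^'m::finite^'n::finite"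
  shows "(x - x') \<bullet> (- (R *v y) + R *v y') + (y - y') \<bullet> (transpose R *v x - transpose R *v x') = 0"
proof -
  have "(y - y') \<bullet> (transpose R *v x - transpose R *v x') = (x - x') \<bullet> (R *v (y - y'))"
  proof -
    have "transpose R *v x - transpose R *v x' = transpose R *v (x - x')"
      by (simp add: matrix_vector_mult_diff_distrib)
    also have "\<dots> = (x - x') v* R" by (rule transpose_matrix_vector)
    finally have "(y - y') \<bullet> (transpose R *v x - transpose R *v x') = ((x - x') v* R) \<bullet> (y - y')"
      by (simp add: inner_commute)
    then show ?thesis by (simp add: dot_lmul_matrix)
  qed
  moreover have "- (R *v y) + R *v y' = - (R *v (y - y'))"
    by (simp add: matrix_vector_mult_diff_distrib)
  ultimately show ?thesis by (simp add: inner_minus_right)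
qed

lemma norm4:
  fixes a :: "'a::real_inner" and b :: "'b::real_inner" and c :: "'c::real_inner" and d :: "'d::real_inner"
  shows "(norm (a, b, c, d))\<^sup>2 = (norm a)\<^sup>2 + (norm b)\<^sup>2 + (norm c)\<^sup>2 + (norm d)\<^sup>2"
  by (simp add: power2_norm_eq_inner inner_Pair)

theorem proposition2:
  fixes R1 :: "real^('n2::finite)^('n1::finite)" and R2 :: "real^'n1^'n2"
    and \<epsilon>1 \<epsilon>2 \<alpha> :: real
    and \<nu>1 :: "real^'n1 \<Rightarrow> real" and g\<nu>1 :: "real^'n1 \<Rightarrow> real^'n1" and H\<nu>1 :: "real^'n1 \<Rightarrow> real^'n1^'n1"
    and \<nu>2 :: "real^'n2 \<Rightarrow> real" and g\<nu>2 :: "real^'n2 \<Rightarrow> real^'n2" and H\<nu>2 :: "real^'n2 \<Rightarrow> real^'n2^'n2"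
    and D1 :: "real^'n2 \<Rightarrow> real^'n2 \<Rightarrow> real" and gp1 gq1 :: "real^'n2 \<Rightarrow> real^'n2 \<Rightarrow> real^'n2"
    and Hpp1 Hpq1 Hqp1 Hqq1 :: "real^'n2 \<Rightarrow> real^'n2 \<Rightarrow> real^'n2^'n2"
    and D2 :: "real^'n1 \<Rightarrow> real^'n1 \<Rightarrow> real" and gp2 gq2 :: "real^'n1 \<Rightarrow> real^'n1 \<Rightarrow> real^'n1"
    and Hpp2 Hpq2 Hqp2 Hqq2 :: "real^'n1 \<Rightarrow> real^'n1 \<Rightarrow> real^'n1^'n1"
    and U1 :: "(real^'n1) set" and U2 :: "(real^'n2) set"
    and V1 :: "((real^'n2) \<times> (real^'n2)) set" and V2 :: "((real^'n1) \<times> (real^'n1)) set"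
  assumes "\<alpha> > 0" and "\<epsilon>1 > 0" and "\<epsilon>2 > 0"
    and "prob_simplex \<subseteq> U1" and "C2_on U1 \<nu>1 g\<nu>1 H\<nu>1" and "strictly_convex_on U1 \<nu>1"
    and "prob_simplex \<subseteq> U2" and "C2_on U2 \<nu>2 g\<nu>2 H\<nu>2" and "strictly_convex_on U2 \<nu>2"
    and "prob_simplex \<times> prob_simplex \<subseteq> V1" and "C2_on2 V1 D1 gp1 gq1 Hpp1 Hpq1 Hqp1 Hqq1"
    and "\<forall>q\<in>prob_simplex. convex_on prob_simplex (\<lambda>p. D1 p q)"
    and "prob_simplex \<times> prob_simplex \<subseteq> V2" and "C2_on2 V2 D2 gp2 gq2 Hpp2 Hpq2 Hqp2 Hqq2"
    and "\<forall>q\<in>prob_simplex. convex_on prob_simplex (\<lambda>p. D2 p q)"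
  shows
    "(strongly_monotone_game R1 R2 \<epsilon>1 \<epsilon>2 g\<nu>1 g\<nu>2 gp1 gp2 \<alpha> \<longrightarrow>
        (\<forall>x\<in>prob_simplex. psd_ge (\<epsilon>1 *\<^sub>R H\<nu>1 x) \<alpha>) \<and>
        (\<forall>x\<in>prob_simplex. psd_ge (\<epsilon>2 *\<^sub>R H\<nu>2 x) \<alpha>) \<and>
        (\<forall>p\<in>prob_simplex. \<forall>q\<in>prob_simplex. psd_ge (Hpp1 p q) \<alpha>) \<and>
        (\<forall>p\<in>prob_simplex. \<forall>q\<in>prob_simplex. psd_ge (Hpp2 p q) \<alpha>))
     \<and>
     ((convex_on (prob_simplex \<times> prob_simplex) (\<lambda>w. D1 (fst w) (snd w)) \<and>
       convex_on (prob_simplex \<times> prob_simplex) (\<lambda>w. D2 (fst w) (snd w)) \<and>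
       (\<forall>\<pi>1\<in>prob_simplex. \<forall>p2\<in>prob_simplex.
          psd_ge (\<epsilon>1 *\<^sub>R H\<nu>1 \<pi>1 - (1/2) *\<^sub>R Hqq2 p2 \<pi>1) \<alpha> \<and> psd_ge ((1/2) *\<^sub>R Hpp2 p2 \<pi>1) \<alpha>) \<and>
       (\<forall>\<pi>2\<in>prob_simplex. \<forall>p1\<in>prob_simplex.
          psd_ge (\<epsilon>2 *\<^sub>R H\<nu>2 \<pi>2 - (1/2) *\<^sub>R Hqq1 p1 \<pi>2) \<alpha> \<and> psd_ge ((1/2) *\<^sub>R Hpp1 p1 \<pi>2) \<alpha>))
      \<longrightarrow> strongly_monotone_game R1 R2 \<epsilon>1 \<epsilon>2 g\<nu>1 g\<nu>2 gp1 gp2 \<alpha>)"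
proof (intro conjI impI)
  note A = assms
  let ?F = "game_F R1 R2 \<epsilon>1 \<epsilon>2 g\<nu>1 g\<nu>2 gp1 gp2"
  assume SM: "strongly_monotone_game R1 R2 \<epsilon>1 \<epsilon>2 g\<nu>1 g\<nu>2 gp1 gp2 \<alpha>"
  have SM': "\<alpha> * (norm (z - z'))\<^sup>2 \<le> (z - z') \<bullet> (?F z - ?F z')"
    if "z \<in> joint_set" "z' \<in> joint_set" for z z'
    using SM that unfolding strongly_monotone_game_def by auto
  have u1: "(unif :: real^'n1) \<in> prob_simplex" and u2: "(unif :: real^'n2) \<in> prob_simplex"
    by (rule unif_simplex)+
  show "\<forall>x\<in>prob_simplex. psd_ge (\<epsilon>1 *\<^sub>R H\<nu>1 x) \<alpha>"
  proof
    fix x :: "real^'n1" assume xs: "x \<in> prob_simplex"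
    show "psd_ge (\<epsilon>1 *\<^sub>R H\<nu>1 x) \<alpha>"
    proof (rule psd_nu[OF A(4,5) _ xs])
      fix x y :: "real^'n1" assume "x \<in> prob_simplex" "y \<in> prob_simplex"
      then have "\<alpha> * (norm ((y, unif::real^'n2, unif::real^'n2, unif::real^'n1) - (x, unif::real^'n2, unif::real^'n2, unif::real^'n1)))\<^sup>2
         \<le> ((y, unif::real^'n2, unif::real^'n2, unif::real^'n1) - (x, unif::real^'n2, unif::real^'n2, unif::real^'n1)) \<bullet> (?F (y, unif::real^'n2, unif::real^'n2, unif::real^'n1) - ?F (x, unif::real^'n2, unif::real^'n2, unif::real^'n1))"
        using u1 u2 by (intro SM') (auto simp: joint_set_def)
      then show "\<alpha> * (norm (y - x))\<^sup>2 \<le> (y - x) \<bullet> (\<epsilon>1 *\<^sub>R g\<nu>1 y - \<epsilon>1 *\<^sub>R g\<nu>1 x)"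
        by (simp add: game_F_def norm4 inner_Pair)
    qed
  qed
  show "\<forall>x\<in>prob_simplex. psd_ge (\<epsilon>2 *\<^sub>R H\<nu>2 x) \<alpha>"
  proof
    fix x :: "real^'n2" assume xs: "x \<in> prob_simplex"
    show "psd_ge (\<epsilon>2 *\<^sub>R H\<nu>2 x) \<alpha>"
    proof (rule psd_nu[OF A(7,8) _ xs])
      fix x y :: "real^'n2" assume "x \<in> prob_simplex" "y \<in> prob_simplex"
      then have "\<alpha> * (norm ((unif::real^'n1, y, unif::real^'n2, unif::real^'n1) - (unif::real^'n1, x, unif::real^'n2, unif::real^'n1)))\<^sup>2
         \<le> ((unif::real^'n1, y, unif::real^'n2, unif::real^'n1) - (unif::real^'n1, x, unif::real^'n2, unif::real^'n1)) \<bullet> (?F (unif::real^'n1, y, unif::real^'n2, unif::real^'n1) - ?F (unif::real^'n1, x, unif::real^'n2, unif::real^'n1))"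
        using u1 u2 by (intro SM') (auto simp: joint_set_def)
      then show "\<alpha> * (norm (y - x))\<^sup>2 \<le> (y - x) \<bullet> (\<epsilon>2 *\<^sub>R g\<nu>2 y - \<epsilon>2 *\<^sub>R g\<nu>2 x)"
        by (simp add: game_F_def norm4 inner_Pair)
    qed
  qed
  show "\<forall>p\<in>prob_simplex. \<forall>q\<in>prob_simplex. psd_ge (Hpp1 p q) \<alpha>"
  proof (intro ballI)
    fix p q :: "real^'n2" assume ps: "p \<in> prob_simplex" "q \<in> prob_simplex"
    show "psd_ge (Hpp1 p q) \<alpha>"
    proof (rule psd_pp[OF A(10,11) _ ps])
      fix x y :: "real^'n2" assume "x \<in> prob_simplex" "y \<in> prob_simplex"
      then have "\<alpha> * (norm ((unif::real^'n1, q, y, unif::real^'n1) - (unif::real^'n1, q, x, unif::real^'n1)))\<^sup>2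
         \<le> ((unif::real^'n1, q, y, unif::real^'n1) - (unif::real^'n1, q, x, unif::real^'n1)) \<bullet> (?F (unif::real^'n1, q, y, unif::real^'n1) - ?F (unif::real^'n1, q, x, unif::real^'n1))"
        using u1 u2 ps by (intro SM') (auto simp: joint_set_def)
      then show "\<alpha> * (norm (y - x))\<^sup>2 \<le> (y - x) \<bullet> (gp1 y q - gp1 x q)"
        by (simp add: game_F_def norm4 inner_Pair)
    qed
  qed
  show "\<forall>p\<in>prob_simplex. \<forall>q\<in>prob_simplex. psd_ge (Hpp2 p q) \<alpha>"
  proof (intro ballI)
    fix p q :: "real^'n1" assume ps: "p \<in> prob_simplex" "q \<in> prob_simplex"
    show "psd_ge (Hpp2 p q) \<alpha>"
    proof (rule psd_pp[OF A(13,14) _ ps])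
      fix x y :: "real^'n1" assume "x \<in> prob_simplex" "y \<in> prob_simplex"
      then have "\<alpha> * (norm ((q, unif::real^'n2, unif::real^'n2, y) - (q, unif::real^'n2, unif::real^'n2, x)))\<^sup>2
         \<le> ((q, unif::real^'n2, unif::real^'n2, y) - (q, unif::real^'n2, unif::real^'n2, x)) \<bullet> (?F (q, unif::real^'n2, unif::real^'n2, y) - ?F (q, unif::real^'n2, unif::real^'n2, x))"
        using u1 u2 ps by (intro SM') (auto simp: joint_set_def)
      then show "\<alpha> * (norm (y - x))\<^sup>2 \<le> (y - x) \<bullet> (gp2 y q - gp2 x q)"
        by (simp add: game_F_def norm4 inner_Pair)
    qed
  qed
next
  note A = assms
  assume H: "convex_on (prob_simplex \<times> prob_simplex) (\<lambda>w. D1 (fst w) (snd w)) \<and>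
       convex_on (prob_simplex \<times> prob_simplex) (\<lambda>w. D2 (fst w) (snd w)) \<and>
       (\<forall>\<pi>1\<in>prob_simplex. \<forall>p2\<in>prob_simplex.
          psd_ge (\<epsilon>1 *\<^sub>R H\<nu>1 \<pi>1 - (1/2) *\<^sub>R Hqq2 p2 \<pi>1) \<alpha> \<and> psd_ge ((1/2) *\<^sub>R Hpp2 p2 \<pi>1) \<alpha>) \<and>
       (\<forall>\<pi>2\<in>prob_simplex. \<forall>p1\<in>prob_simplex.
          psd_ge (\<epsilon>2 *\<^sub>R H\<nu>2 \<pi>2 - (1/2) *\<^sub>R Hqq1 p1 \<pi>2) \<alpha> \<and> psd_ge ((1/2) *\<^sub>R Hpp1 p1 \<pi>2) \<alpha>)"
  show "strongly_monotone_game R1 R2 \<epsilon>1 \<epsilon>2 g\<nu>1 g\<nu>2 gp1 gp2 \<alpha>"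
    unfolding strongly_monotone_game_def
  proof (intro ballI)
    fix z z' :: "(real^'n1) \<times> (real^'n2) \<times> (real^'n2) \<times> (real^'n1)"
    assume zs: "z \<in> joint_set" "z' \<in> joint_set"
    obtain \<pi>1 \<pi>2 p1 p2 where z: "z = (\<pi>1, \<pi>2, p1, p2)" by (cases z) auto
    obtain \<pi>1' \<pi>2' p1' p2' where z': "z' = (\<pi>1', \<pi>2', p1', p2')" by (cases z') auto
    have m: "\<pi>1 \<in> prob_simplex" "\<pi>2 \<in> prob_simplex" "p1 \<in> prob_simplex" "p2 \<in> prob_simplex"
      "\<pi>1' \<in> prob_simplex" "\<pi>2' \<in> prob_simplex" "p1' \<in> prob_simplex" "p2' \<in> prob_simplex"
      using zs unfolding z z' joint_set_def by auto
    have I1: "\<alpha> * ((norm (p1 - p1'))\<^sup>2 + (norm (\<pi>2 - \<pi>2'))\<^sup>2)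
       \<le> (p1 - p1') \<bullet> (gp1 p1 \<pi>2 - gp1 p1' \<pi>2') + (\<pi>2 - \<pi>2') \<bullet> (\<epsilon>2 *\<^sub>R g\<nu>2 \<pi>2 - \<epsilon>2 *\<^sub>R g\<nu>2 \<pi>2')"
      by (rule pair_ineq[OF A(10,11) _ A(7,8) _ m(3,7,2,6)]) (use H in auto)
    have I2: "\<alpha> * ((norm (p2 - p2'))\<^sup>2 + (norm (\<pi>1 - \<pi>1'))\<^sup>2)
       \<le> (p2 - p2') \<bullet> (gp2 p2 \<pi>1 - gp2 p2' \<pi>1') + (\<pi>1 - \<pi>1') \<bullet> (\<epsilon>1 *\<^sub>R g\<nu>1 \<pi>1 - \<epsilon>1 *\<^sub>R g\<nu>1 \<pi>1')"
      by (rule pair_ineq[OF A(13,14) _ A(4,5) _ m(4,8,1,5)]) (use H in auto)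
    have B1: "(\<pi>1 - \<pi>1') \<bullet> (- (R1 *v p1) + R1 *v p1') + (p1 - p1') \<bullet> (transpose R1 *v \<pi>1 - transpose R1 *v \<pi>1') = 0"
      by (rule bil_cancel)
    have B2: "(\<pi>2 - \<pi>2') \<bullet> (- (R2 *v p2) + R2 *v p2') + (p2 - p2') \<bullet> (transpose R2 *v \<pi>2 - transpose R2 *v \<pi>2') = 0"
      by (rule bil_cancel)
    have E: "(z - z') \<bullet> (game_F R1 R2 \<epsilon>1 \<epsilon>2 g\<nu>1 g\<nu>2 gp1 gp2 z - game_F R1 R2 \<epsilon>1 \<epsilon>2 g\<nu>1 g\<nu>2 gp1 gp2 z')
      = ((\<pi>1 - \<pi>1') \<bullet> (- (R1 *v p1) + R1 *v p1') + (p1 - p1') \<bullet> (transpose R1 *v \<pi>1 - transpose R1 *v \<pi>1'))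
      + ((\<pi>2 - \<pi>2') \<bullet> (- (R2 *v p2) + R2 *v p2') + (p2 - p2') \<bullet> (transpose R2 *v \<pi>2 - transpose R2 *v \<pi>2'))
      + ((p1 - p1') \<bullet> (gp1 p1 \<pi>2 - gp1 p1' \<pi>2') + (\<pi>2 - \<pi>2') \<bullet> (\<epsilon>2 *\<^sub>R g\<nu>2 \<pi>2 - \<epsilon>2 *\<^sub>R g\<nu>2 \<pi>2'))
      + ((p2 - p2') \<bullet> (gp2 p2 \<pi>1 - gp2 p2' \<pi>1') + (\<pi>1 - \<pi>1') \<bullet> (\<epsilon>1 *\<^sub>R g\<nu>1 \<pi>1 - \<epsilon>1 *\<^sub>R g\<nu>1 \<pi>1'))"
      unfolding z z' game_F_def by (simp add: inner_Pair inner_diff_right inner_add_right algebra_simps)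
    have N: "(norm (z - z'))\<^sup>2 = (norm (\<pi>1 - \<pi>1'))\<^sup>2 + (norm (\<pi>2 - \<pi>2'))\<^sup>2 + (norm (p1 - p1'))\<^sup>2 + (norm (p2 - p2'))\<^sup>2"
      unfolding z z' by (simp add: norm4)
    show "\<alpha> * (norm (z - z'))\<^sup>2 \<le> (z - z') \<bullet> (game_F R1 R2 \<epsilon>1 \<epsilon>2 g\<nu>1 g\<nu>2 gp1 gp2 z - game_F R1 R2 \<epsilon>1 \<epsilon>2 g\<nu>1 g\<nu>2 gp1 gp2 z')"
      unfolding E N using I1 I2 B1 B2 by (simp add: algebra_simps)
  qed
qed

end
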